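(* Let $A_1A_2A_3$ be a triangle in a Euclidean space $\mathbb{R}^n$, $n\ge2$, with angles $\alpha_k$ at $A_k$. For $0\le t_1\le1$ let $P=(1-t_1)A_1+t_1A_2$, and let $Q$ be the foot of the corresponding circumcevian, i.e. the point other than $A_3$ where the ray from $A_3$ through $P$ meets the circumcircle of the triangle. Then $Q=\frac{m_1A_1+m_2A_2+m_3A_3}{m_1+m_2+m_3}$ with $m_1=\{\sin^2\alpha_2+t_1\sin(\alpha_1-\alpha_2)\sin\alpha_3\}(1-t_1)$, $m_2=\{\sin^2\alpha_2+t_1\sin(\alpha_1-\alpha_2)\sin\alpha_3\}t_1$, $m_3=-(1-t_1)t_1\sin^2\alpha_3$.
   Context: Barycentric coordinates with respect to the (affinely independent) vertices $A_1,A_2,A_3$; they are homogeneous. *)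

theory Defs
  imports "HOL-Analysis.Analysis"
begin

definition vangle :: "'a::euclidean_space \<Rightarrow> 'a \<Rightarrow> real" where
  "vangle u v = arccos ((u \<bullet> v) / (norm u * norm v))"

definition tri_angle :: "'a::euclidean_space \<Rightarrow> 'a \<Rightarrow> 'a \<Rightarrow> real" where
  "tri_angle a b c = vangle (a - b) (c - b)"

definition circumcircle :: "'a::euclidean_space \<Rightarrow> 'a \<Rightarrow> 'a \<Rightarrow> 'a set" where
  "circumcircle A1 A2 A3 =
     {X. X \<in> affine hull {A1, A2, A3} \<and>
         (\<exists>C \<in> affine hull {A1, A2, A3}.
            dist C A1 = dist C A2 \<and> dist C A2 = dist C A3 \<and> dist C X = dist C A1)}"

end

theory Submission
  imports Defs
begin

lemma vangle_cos_sin: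
  fixes u v :: "'a::euclidean_space"
  assumes "u \<noteq> 0" "v \<noteq> 0"
  shows "cos (vangle u v) = (u \<bullet> v) / (norm u * norm v)"
    and "sin (vangle u v) = sqrt ((norm u * norm v)^2 - (u \<bullet> v)^2) / (norm u * norm v)"
proof -
  have p: "norm u * norm v > 0" using assms by simp
  have cs: "\<bar>u \<bullet> v\<bar> \<le> norm u * norm v" by (rule Cauchy_Schwarz_ineq2)
  hence b: "\<bar>(u \<bullet> v) / (norm u * norm v)\<bar> \<le> 1" using p by (simp add: abs_divide divide_le_eq_1)
  show "cos (vangle u v) = (u \<bullet> v) / (norm u * norm v)"
    unfolding vangle_def using b by (rule cos_arccos_abs)
  have "sin (vangle u v) = sqrt (1 - ((u \<bullet> v) / (norm u * norm v))^2)"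
    unfolding vangle_def using b by (rule sin_arccos_abs)
  also have "1 - ((u \<bullet> v) / (norm u * norm v))^2 = ((norm u * norm v)^2 - (u \<bullet> v)^2) / (norm u * norm v)^2"
    using assms by (simp add: field_simps)
  also have "sqrt \<dots> = sqrt ((norm u * norm v)^2 - (u \<bullet> v)^2) / (norm u * norm v)"
    using p by (simp add: real_sqrt_divide)
  finally show "sin (vangle u v) = sqrt ((norm u * norm v)^2 - (u \<bullet> v)^2) / (norm u * norm v)" .
qed

theorem mainTheorem19:
  fixes A1 A2 A3 P Q :: "real ^ 'n" and t1 :: real
  assumes dim: "CARD('n) \<ge> 2"
    and tri: "\<not> collinear {A1, A2, A3}"
    and t1: "0 \<le> t1" "t1 \<le> 1"
    and P: "P = (1 - t1) *\<^sub>R A1 + t1 *\<^sub>R A2"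
    and Q_ray: "\<exists>s\<ge>0. Q = A3 + s *\<^sub>R (P - A3)"
    and Q_circ: "Q \<in> circumcircle A1 A2 A3"
    and Q_ne: "Q \<noteq> A3"
  shows "let \<alpha>1 = tri_angle A2 A1 A3; \<alpha>2 = tri_angle A1 A2 A3; \<alpha>3 = tri_angle A1 A3 A2;
             m1 = ((sin \<alpha>2)\<^sup>2 + t1 * sin (\<alpha>1 - \<alpha>2) * sin \<alpha>3) * (1 - t1);
             m2 = ((sin \<alpha>2)\<^sup>2 + t1 * sin (\<alpha>1 - \<alpha>2) * sin \<alpha>3) * t1;
             m3 = - (1 - t1) * t1 * (sin \<alpha>3)\<^sup>2
         in Q = (1 / (m1 + m2 + m3)) *\<^sub>R (m1 *\<^sub>R A1 + m2 *\<^sub>R A2 + m3 *\<^sub>R A3)"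
proof -
  define e1 where "e1 = A1 - A3"
  define e2 where "e2 = A2 - A3"
  define x where "x = e1 \<bullet> e1"
  define y where "y = e2 \<bullet> e2"
  define z where "z = e1 \<bullet> e2"
  define G where "G = x*y - z^2"
  define a where "a = norm e2"
  define b where "b = norm e1"
  define c where "c = norm (e2 - e1)"
  have "{A1, A2, A3} = {A1, A3, A2}" by auto
  hence ncol: "\<not> collinear {0, e1, e2}"
    using tri collinear_3[of A1 A3 A2] unfolding e1_def e2_def NO_MATCH_def by simp
  have e1nz: "e1 \<noteq> 0" and e2nz: "e2 \<noteq> 0" using ncol collinear_lemma by auto
  have e12: "e2 - e1 \<noteq> 0"
  proof
    assume "e2 - e1 = 0"
    hence "e2 = 1 *\<^sub>R e1" by simp
    thus False using ncol collinear_lemma by blast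
  qed
  have "\<bar>z\<bar> \<noteq> norm e1 * norm e2" using ncol norm_cauchy_schwarz_equal z_def by auto
  moreover have "\<bar>z\<bar> \<le> norm e1 * norm e2" using Cauchy_Schwarz_ineq2 z_def by auto
  ultimately have "\<bar>z\<bar> < norm e1 * norm e2" by linarith
  hence "\<bar>z\<bar>^2 < (norm e1 * norm e2)^2" by (intro power_strict_mono) auto
  hence Gpos: "G > 0" by (simp add: G_def x_def y_def power_mult_distrib power2_norm_eq_inner)
  have a2: "a^2 = y" and b2: "b^2 = x" by (simp_all add: a_def b_def x_def y_def power2_norm_eq_inner)
  have c2: "c^2 = x + y - 2*z" unfolding c_def power2_norm_eq_inner x_def y_def z_def
    by (simp add: inner_diff_left inner_diff_right inner_commute)
  have apos: "a > 0" and bpos: "b > 0" and cpos: "c > 0" using e1nz e2nz e12 by (simp_all add: a_def b_def c_def)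
  define g where "g = sqrt G"
  have g2: "g^2 = G" using Gpos by (simp add: g_def)
  define \<alpha>1 where "\<alpha>1 = tri_angle A2 A1 A3"
  define \<alpha>2 where "\<alpha>2 = tri_angle A1 A2 A3"
  define \<alpha>3 where "\<alpha>3 = tri_angle A1 A3 A2"
  have r1: "A2 - A1 = e2 - e1" "A3 - A1 = - e1" "A1 - A2 = e1 - e2" "A3 - A2 = - e2"
    by (simp_all add: e1_def e2_def)
  have ne21: "norm (e1 - e2) = c" by (simp add: c_def norm_minus_commute)
  have i1: "(e2 - e1) \<bullet> (- e1) = x - z" by (simp add: x_def z_def inner_diff_left inner_diff_right inner_commute)
  have i2: "(e1 - e2) \<bullet> (- e2) = y - z" by (simp add: y_def z_def inner_diff_left inner_diff_right inner_commute)
  have cos1: "cos \<alpha>1 = (x - z) / (c * b)"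
    unfolding \<alpha>1_def tri_angle_def r1 c_def b_def
    by (rule vangle_cos_sin(1)[of "e2 - e1" "- e1", unfolded i1 norm_minus_cancel]) (use e12 e1nz in auto)
  have sin1: "sin \<alpha>1 = g / (c * b)"
  proof -
    have G1: "(c*b)^2 - (x - z)^2 = G" unfolding power_mult_distrib c2 b2 G_def by (simp add: algebra_simps power2_eq_square)
    have "sin \<alpha>1 = sqrt ((c*b)^2 - (x - z)^2) / (c * b)"
      unfolding \<alpha>1_def tri_angle_def r1 c_def b_def
      by (rule vangle_cos_sin(2)[of "e2 - e1" "- e1", unfolded i1 norm_minus_cancel]) (use e12 e1nz in auto)
    thus ?thesis unfolding G1 g_def .
  qed
  have cos2: "cos \<alpha>2 = (y - z) / (c * a)"
    unfolding \<alpha>2_def tri_angle_def r1 ne21[symmetric] a_def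
    by (rule vangle_cos_sin(1)[of "e1 - e2" "- e2", unfolded i2 norm_minus_cancel]) (use e12 e2nz in auto)
  have sin2: "sin \<alpha>2 = g / (c * a)"
  proof -
    have G2: "(c*a)^2 - (y - z)^2 = G" unfolding power_mult_distrib c2 a2 G_def by (simp add: algebra_simps power2_eq_square)
    have "sin \<alpha>2 = sqrt ((c*a)^2 - (y - z)^2) / (c * a)"
      unfolding \<alpha>2_def tri_angle_def r1 ne21[symmetric] a_def
      by (rule vangle_cos_sin(2)[of "e1 - e2" "- e2", unfolded i2 norm_minus_cancel]) (use e12 e2nz in auto)
    thus ?thesis unfolding G2 g_def .
  qed
  have sin3: "sin \<alpha>3 = g / (b * a)"
  proof -
    have G3: "(b*a)^2 - z^2 = G" unfolding power_mult_distrib b2 a2 G_def by (simp add: algebra_simps)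
    have "sin \<alpha>3 = sqrt ((b*a)^2 - z^2) / (b * a)"
      unfolding \<alpha>3_def tri_angle_def e1_def[symmetric] e2_def[symmetric] a_def b_def
      by (rule vangle_cos_sin(2)[of "e1" "e2", unfolded z_def[symmetric]]) (use e1nz e2nz in auto)
    thus ?thesis unfolding G3 g_def .
  qed
  define k where "k = G / (a^2 * b^2 * c^2)"
  define N where "N = (1 - t1) * x + t1 * y"
  define D where "D = N - t1 * (1 - t1) * c^2"
  have h1: "(sin \<alpha>2)\<^sup>2 + t1 * sin (\<alpha>1 - \<alpha>2) * sin \<alpha>3 = k * N"
  proof -
    have "(sin \<alpha>2)\<^sup>2 + t1 * sin (\<alpha>1 - \<alpha>2) * sin \<alpha>3
       = (g/(c*a))^2 + t1 * ((g/(c*b)) * ((y - z)/(c*a)) - ((x-z)/(c*b)) * (g/(c*a))) * (g/(b*a))"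
      by (simp add: sin_diff sin1 sin2 sin3 cos1 cos2)
    also have "\<dots> = g^2 * (b^2 + t1 * (y - x)) / (a^2*b^2*c^2)"
      using apos bpos cpos by (simp add: field_simps power2_eq_square)
    also have "\<dots> = k * N" unfolding k_def N_def using g2 b2
      by (simp add: algebra_simps)
    finally show ?thesis .
  qed
  have h3: "(sin \<alpha>3)\<^sup>2 = k * c^2"
    unfolding sin3 k_def using apos bpos cpos g2 by (simp add: field_simps power2_eq_square)
  obtain s where s0: "s \<ge> 0" and Qs: "Q = A3 + s *\<^sub>R (P - A3)" using Q_ray by blast
  define d where "d = (1 - t1) *\<^sub>R e1 + t1 *\<^sub>R e2"
  have Pd: "P - A3 = d" unfolding P d_def e1_def e2_def by (simp add: algebra_simps)
  obtain C where dC: "dist C A1 = dist C A2" "dist C A2 = dist C A3" "dist C Q = dist C A1"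
    using Q_circ unfolding circumcircle_def by blast
  define w where "w = C - A3"
  have n1: "norm (w - e1) = norm w" using dC by (simp add: dist_norm w_def e1_def)
  have n2: "norm (w - e2) = norm w" using dC by (simp add: dist_norm w_def e2_def)
  have nq: "norm (w - s *\<^sub>R d) = norm w" using dC Qs Pd by (simp add: dist_norm w_def algebra_simps)
  have we1: "2 * (w \<bullet> e1) = x"
  proof -
    have "(w - e1) \<bullet> (w - e1) = w \<bullet> w" using n1 by (metis power2_norm_eq_inner)
    thus ?thesis by (simp add: x_def inner_diff_left inner_diff_right inner_commute)
  qed
  have we2: "2 * (w \<bullet> e2) = y"
  proof -
    have "(w - e2) \<bullet> (w - e2) = w \<bullet> w" using n2 by (metis power2_norm_eq_inner)
    thus ?thesis by (simp add: y_def inner_diff_left inner_diff_right inner_commute)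
  qed
  have snz: "s \<noteq> 0" using Qs Q_ne by auto
  have dnz: "d \<noteq> 0" using Qs Q_ne Pd by auto
  have sdd: "s * (d \<bullet> d) = 2 * (w \<bullet> d)"
  proof -
    have "(w - s *\<^sub>R d) \<bullet> (w - s *\<^sub>R d) = w \<bullet> w" using nq by (metis power2_norm_eq_inner)
    hence "s * (s * (d \<bullet> d) - 2 * (w \<bullet> d)) = 0"
      by (simp add: inner_diff_left inner_diff_right inner_commute algebra_simps)
    thus ?thesis using snz by simp
  qed
  have wd: "2 * (w \<bullet> d) = N" unfolding d_def N_def using we1 we2
    by (simp add: inner_add_right algebra_simps)
  have dd: "d \<bullet> d = D" unfolding d_def D_def N_def c2 x_def y_def z_def
    by (simp add: inner_add_left inner_add_right inner_commute algebra_simps power2_eq_square)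
  have Dpos: "D > 0" using dnz dd by (metis inner_gt_zero_iff)
  have sval: "s = N / D" using sdd wd dd Dpos by (simp add: field_simps)
  have kpos: "k > 0" unfolding k_def using Gpos apos bpos cpos by simp
  define m1 where "m1 = k * N * (1 - t1)"
  define m2 where "m2 = k * N * t1"
  define m3 where "m3 = - (1 - t1) * t1 * (k * c^2)"
  have M: "m1 + m2 + m3 = k * D" unfolding m1_def m2_def m3_def D_def by (simp add: algebra_simps)
  have V: "m1 *\<^sub>R A1 + m2 *\<^sub>R A2 + m3 *\<^sub>R A3 = (k * D) *\<^sub>R A3 + (k * N) *\<^sub>R d"
  proof -
    have "A1 = A3 + e1" "A2 = A3 + e2" by (simp_all add: e1_def e2_def)
    hence "m1 *\<^sub>R A1 + m2 *\<^sub>R A2 + m3 *\<^sub>R A3 = (m1 + m2 + m3) *\<^sub>R A3 + m1 *\<^sub>R e1 + m2 *\<^sub>R e2"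
      by (simp add: algebra_simps)
    also have "\<dots> = (k * D) *\<^sub>R A3 + (k * N) *\<^sub>R d"
      by (subst M) (simp add: d_def m1_def m2_def algebra_simps)
    finally show ?thesis .
  qed
  have "Q = (1 / (m1 + m2 + m3)) *\<^sub>R (m1 *\<^sub>R A1 + m2 *\<^sub>R A2 + m3 *\<^sub>R A3)"
    unfolding V M using kpos Dpos by (simp add: Qs Pd sval scaleR_add_right)
  thus ?thesis unfolding Let_def \<alpha>1_def[symmetric] \<alpha>2_def[symmetric] \<alpha>3_def[symmetric] h1 h3
    m1_def m2_def m3_def by simp
qed

end
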